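(* Let $d>0$, $\mu>0$, let $J$ satisfy (J) and let $f$ satisfy (f3). Suppose there is a pair $(c_0,\phi^{c_0})\in(0,\infty)\times C^1((-\infty,0])$, with $\phi^{c_0}\ge0$ nonincreasing in $x$, satisfying $$d\int_{-\infty}^0J(x-y)\phi^{c_0}(y)\,dy-d\phi^{c_0}(x)+c_0(\phi^{c_0})'(x)+f(\phi^{c_0}(x))=0\ (x<0),\quad \phi^{c_0}(-\infty)=1,\ \phi^{c_0}(0)=0,$$ and $$c_0=\mu\int_{-\infty}^0\int_0^{+\infty}J(x-y)\phi^{c_0}(x)\,dy\,dx.$$ Then $\int_{-\infty}^0\int_0^{+\infty}J(x-y)\,dy\,dx<+\infty$.
   Context: Condition (J): $J\in C(\mathbb{R})\cap L^\infty(\mathbb{R})$, $J\ge 0$, $J(0)>0$, $\int_{\mathbb{R}}J=1$, $J$ even. Condition (f3): $f\in C^1([0,\infty))$, $f(0)=f(1)=0$, $f>0$ in $(0,1)$, $f'(0)>0>f'(1)$, $f(u)/u$ nonincreasing in $u>0$. *)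

theory Defs
  imports "HOL-Analysis.Analysis"
begin

definition cond_J :: "(real \<Rightarrow> real) \<Rightarrow> bool" where
  "cond_J J \<longleftrightarrow>
     continuous_on UNIV J \<and> (\<exists>M. \<forall>x. \<bar>J x\<bar> \<le> M) \<and>
     (\<forall>x. J x \<ge> 0) \<and> J 0 > 0 \<and>
     integrable lborel J \<and> (LINT x|lborel. J x) = 1 \<and>
     (\<forall>x. J (- x) = J x)"

definition cond_f3 :: "(real \<Rightarrow> real) \<Rightarrow> bool" where
  "cond_f3 f \<longleftrightarrow>
     (\<exists>f'. (\<forall>u\<ge>0. (f has_real_derivative f' u) (at u within {0..})) \<and>
            continuous_on {0..} f' \<and> f' 0 > 0 \<and> f' 1 < 0) \<and>
     f 0 = 0 \<and> f 1 = 0 \<and> (\<forall>u. 0 < u \<and> u < 1 \<longrightarrow> f u > 0) \<and>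
     (\<forall>u v. 0 < u \<and> u \<le> v \<longrightarrow> f v / v \<le> f u / u)"

end

theory Submission
  imports Defs
begin

lemma inner_le1:
  assumes "cond_J J"
  shows "(\<integral>\<^sup>+ y. ennreal (J (x - y)) * indicator {0..} y \<partial>lborel) \<le> 1"
proof -
  have Jc: "continuous_on UNIV J" and Jint: "integrable lborel J" and J1: "(LINT x|lborel. J x) = 1"
    and Jpos: "\<forall>x. J x \<ge> 0"
    using assms unfolding cond_J_def by auto
  have [measurable]: "J \<in> borel_measurable borel"
    using Jc by (simp add: borel_measurable_continuous_onI)
  have "(\<integral>\<^sup>+ y. ennreal (J (x - y)) * indicator {0..} y \<partial>lborel) \<le> (\<integral>\<^sup>+ y. ennreal (J (x - y)) \<partial>lborel)"
    by (intro nn_integral_mono) (auto simp: indicator_def)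
  also have "(\<integral>\<^sup>+ y. ennreal (J (x - y)) \<partial>lborel) = (\<integral>\<^sup>+ y. ennreal (J y) \<partial>lborel)"
    using nn_integral_real_affine[of "\<lambda>y. ennreal (J y)" "-1" x] by simp
  also have "\<dots> = ennreal (LINT x|lborel. J x)"
    using Jint Jpos by (intro nn_integral_eq_integral) auto
  finally show ?thesis using J1 by simp
qed

lemma inner_meas:
  assumes "cond_J J"
  shows "(\<lambda>x. \<integral>\<^sup>+ y. ennreal (J (x - y)) * indicator {0..} y \<partial>lborel) \<in> borel_measurable lborel"
proof -
  have Jc: "continuous_on UNIV J" using assms unfolding cond_J_def by auto
  have [measurable]: "J \<in> borel_measurable borel"
    using Jc by (simp add: borel_measurable_continuous_onI)
  show ?thesis
    by measurable
qed

theorem lemma2p10: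
  fixes d \<mu> c0 :: real and J f \<phi> \<phi>' :: "real \<Rightarrow> real"
  assumes "d > 0" and "\<mu> > 0" and "cond_J J" and "cond_f3 f"
    and "c0 > 0"
    and "\<forall>x\<le>0. (\<phi> has_real_derivative \<phi>' x) (at x within {..0})"
    and "continuous_on {..0} \<phi>'"
    and "\<forall>x\<le>0. \<phi> x \<ge> 0"
    and "\<forall>x y. x \<le> y \<and> y \<le> 0 \<longrightarrow> \<phi> y \<le> \<phi> x"
    and "\<forall>x<0. d * (LINT y:{..0}|lborel. J (x - y) * \<phi> y) - d * \<phi> x
                 + c0 * \<phi>' x + f (\<phi> x) = 0"
    and "(\<phi> \<longlongrightarrow> 1) at_bot" and "\<phi> 0 = 0"
    and "ennreal c0 = ennreal \<mu> *
           (\<integral>\<^sup>+ x\<in>{..0}. (\<integral>\<^sup>+ y\<in>{0..}. ennreal (J (x - y) * \<phi> x) \<partial>lborel) \<partial>lborel)"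
  shows "(\<integral>\<^sup>+ x\<in>{..0}. (\<integral>\<^sup>+ y\<in>{0..}. ennreal (J (x - y)) \<partial>lborel) \<partial>lborel) < \<infinity>"
proof -
  define I where "I x = (\<integral>\<^sup>+ y. ennreal (J (x - y)) * indicator {0..} y \<partial>lborel)" for x
  have Jpos: "\<forall>x. J x \<ge> 0" using assms(3) unfolding cond_J_def by auto
  have Imeas[measurable]: "I \<in> borel_measurable lborel"
    unfolding I_def using inner_meas[OF assms(3)] .
  have Ile: "I x \<le> 1" for x unfolding I_def using inner_le1[OF assms(3)] .
  have "eventually (\<lambda>x. \<phi> x > 1/2) at_bot"
    using assms(11) by (rule order_tendstoD) simp
  then obtain N where N: "\<And>x. x \<le> N \<Longrightarrow> \<phi> x > 1/2" by (auto simp: eventually_at_bot_linorder)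
  define M where "M = max (-N) 0"
  have M0: "M \<ge> 0" and MN: "\<And>x. x \<le> -M \<Longrightarrow> \<phi> x > 1/2" using N by (auto simp: M_def)
  have inner_phi: "(\<integral>\<^sup>+ y\<in>{0..}. ennreal (J (x - y) * \<phi> x) \<partial>lborel) = ennreal (\<phi> x) * I x"
    if "x \<le> 0" for x
  proof -
    have "(\<integral>\<^sup>+ y\<in>{0..}. ennreal (J (x - y) * \<phi> x) \<partial>lborel)
        = (\<integral>\<^sup>+ y. ennreal (\<phi> x) * (ennreal (J (x - y)) * indicator {0..} y) \<partial>lborel)"
      using assms(8) that Jpos by (intro nn_integral_cong) (simp add: ennreal_mult' mult_ac)
    also have "\<dots> = ennreal (\<phi> x) * I x"
      unfolding I_def using Jpos assms(3)
      by (intro nn_integral_cmult) (auto simp: cond_J_def borel_measurable_continuous_onI)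
    finally show ?thesis .
  qed
  have LHS: "(\<integral>\<^sup>+ x\<in>{..0}. (\<integral>\<^sup>+ y\<in>{0..}. ennreal (J (x - y)) \<partial>lborel) \<partial>lborel)
      = (\<integral>\<^sup>+ x. I x * indicator {..0} x \<partial>lborel)"
    unfolding I_def by simp
  have pw: "I x * indicator {..0} x \<le> 2 * (I x * ennreal (1/2) * indicator {..-M} x) + indicator {-M..0} x" for x
  proof (cases "x \<le> -M")
    case True
    have "2 * (I x * ennreal (1/2)) = I x * (2 * ennreal (1/2))" by (simp add: mult_ac)
    also have "2 * ennreal (1/2) = 1"
      using ennreal_mult[of 2 "1/2"] by simp
    finally show ?thesis using True M0 by (auto simp: indicator_def)
  next
    case False
    then show ?thesis using Ile[of x] by (auto simp: indicator_def)
  qed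
  define A where "A = (\<integral>\<^sup>+ x\<in>{..0}. (\<integral>\<^sup>+ y\<in>{0..}. ennreal (J (x - y) * \<phi> x) \<partial>lborel) \<partial>lborel)"
  define B where "B = (\<integral>\<^sup>+ x. I x * ennreal (1/2) * indicator {..-M} x \<partial>lborel)"
  have step1: "(\<integral>\<^sup>+ x. I x * indicator {..0} x \<partial>lborel)
      \<le> (\<integral>\<^sup>+ x. 2 * (I x * ennreal (1/2) * indicator {..-M} x) + indicator {-M..0} x \<partial>lborel)"
    by (intro nn_integral_mono pw)
  have step2: "(\<integral>\<^sup>+ x. 2 * (I x * ennreal (1/2) * indicator {..-M} x) + indicator {-M..0} x \<partial>lborel)
      = 2 * B + (\<integral>\<^sup>+ x. indicator {-M..0} x \<partial>lborel)"
    unfolding B_def by (subst nn_integral_add) (auto simp: nn_integral_cmult)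
  have step3: "(\<integral>\<^sup>+ x. indicator {-M..0} x \<partial>lborel) = ennreal M"
    using M0 by simp
  have step4: "B \<le> A"
    unfolding A_def B_def
  proof (intro nn_integral_mono)
    fix x
    show "I x * ennreal (1/2) * indicator {..-M} x
        \<le> (\<integral>\<^sup>+ y\<in>{0..}. ennreal (J (x - y) * \<phi> x) \<partial>lborel) * indicator {..0} x"
    proof (cases "x \<le> -M")
      case True
      then have "x \<le> 0" using M0 by simp
      then have "(\<integral>\<^sup>+ y\<in>{0..}. ennreal (J (x - y) * \<phi> x) \<partial>lborel) * indicator {..0} x = ennreal (\<phi> x) * I x"
        using inner_phi by simp
      moreover have "ennreal (1/2) \<le> ennreal (\<phi> x)" using MN[OF True] by (intro ennreal_leI) simp
      ultimately show ?thesis using True by (simp add: mult.commute mult_left_mono)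
    qed simp
  qed
  have c0A: "ennreal c0 = ennreal \<mu> * A" using assms(13) unfolding A_def .
  have Afin: "A < \<infinity>"
  proof (rule ccontr)
    assume "\<not> A < \<infinity>"
    then have "A = top" unfolding infinity_ennreal_def using less_top[of A] by blast
    moreover have "ennreal \<mu> \<noteq> 0" using assms(2) by simp
    ultimately have "ennreal c0 = top" using c0A ennreal_mult_top[of "ennreal \<mu>"] by simp
    then show False by (simp only: ennreal_neq_top)
  qed
  have "B < \<infinity>" using step4 Afin by (rule le_less_trans)
  then have fin: "2 * B + ennreal M < \<infinity>" by (simp add: ennreal_mult_less_top)
  have le: "(\<integral>\<^sup>+ x. I x * indicator {..0} x \<partial>lborel) \<le> 2 * B + ennreal M"
    using step1 step2 step3 by simp
  show ?thesis unfolding LHS using le fin by (rule order_le_less_trans)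
qed

end
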